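(* Let $(V,\omega)$ be a $2n$-dimensional symplectic vector space with compatible complex structure $J$, $\lambda\in[0,1]$, and $\tau>0$. In $\mathcal W_\lambda\otimes\mathrm{End}(\Lambda)$, the element $A_\lambda$ commutes with $K_\lambda(\tau)e^{-\lambda\tau N}$.
   Context: $V^{1,0}$ is $V$ with $i$ acting as $J$; $\Lambda=\Lambda^\bullet V^{1,0}$; $c(z)=\varepsilon_z+\iota_z$ (exterior multiplication plus contraction), with $V^*\cong V$ via $\omega(\cdot,J\cdot)$. $\mathcal W_\lambda$ is the Weyl algebra of smooth functions on $V^*$ with asymptotic expansions in homogeneous terms modulo Schwartz functions, with Moyal product $\#_\lambda$ ($(a\#_\lambda b)(x)=(\lambda\pi)^{-2n}\int e^{\frac{2i}{\lambda}\omega^*(u,w)}a(x+u)b(x+w)\,du\,dw$ for $\lambda\ne0$, pointwise product for $\lambda=0$). $A_\lambda$ is the linear function $z\mapsto c(z)$; $N\in\mathrm{End}(\Lambda)$ acts on $\Lambda^kV^{1,0}$ by $2k-n$; $K_\lambda(\tau)(v)=e^{-\tau\|v\|^2}$ if $\lambda=0$ and $(\cosh\lambda\tau)^{-n}e^{-\tanh(\lambda\tau)\|v\|^2/\lambda}$ if $\lambda\ne0$. *)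

theory Defs
  imports "HOL-Analysis.Analysis"
begin

text \<open>Standard model: V = C^n (index type 'n, n = CARD('n)), J = multiplication by i,
  omega(u,v) = Im (sum conj(u_k) v_k), so that g(u,v) = omega(u, J v) = Re (sum u_k conj(v_k)).
  V^* is identified with V via g, and omega^* with omega. V^{1,0} has basis e_S (S a subset of the index type, wedge in increasing order),
  so End(Lambda) = complex^('n set)^('n set).\<close>

type_synonym 'n symb = "complex^'n \<Rightarrow> complex^('n set)^('n set)"

definition omega :: "complex^'n \<Rightarrow> complex^'n \<Rightarrow> real" where
  "omega u v = Im (\<Sum>k\<in>UNIV. cnj (u$k) * v$k)"

definition gmet :: "complex^'n \<Rightarrow> complex^'n \<Rightarrow> real" where
  "gmet u v = Re (\<Sum>k\<in>UNIV. u$k * cnj (v$k))"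

definition wsign :: "'n::linorder set \<Rightarrow> 'n \<Rightarrow> complex" where
  "wsign S j = (-1) ^ card {i\<in>S. i < j}"

text \<open>exterior multiplication by z: e_j wedge e_S = wsign S j e_{S+j}\<close>
definition ext_mult :: "complex^('n::{finite,linorder}) \<Rightarrow> complex^('n set)^('n set)" where
  "ext_mult z = (\<chi> T S. \<Sum>j\<in>UNIV. if j \<notin> S \<and> T = insert j S then z$j * wsign S j else 0)"

text \<open>contraction by z using the hermitian metric (antilinear in z); adjoint of ext_mult z\<close>
definition contr :: "complex^('n::{finite,linorder}) \<Rightarrow> complex^('n set)^('n set)" where
  "contr z = (\<chi> T S. \<Sum>j\<in>UNIV. if j \<in> S \<and> T = S - {j} then cnj (z$j) * wsign S j else 0)"

definition cliff :: "complex^('n::{finite,linorder}) \<Rightarrow> complex^('n set)^('n set)" where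
  "cliff z = ext_mult z + contr z"

definition A_sym :: "real \<Rightarrow> ('n::{finite,linorder}) symb" where
  "A_sym lam = (\<lambda>z. cliff z)"

definition Nop :: "complex^('n::finite set)^('n set)" where
  "Nop = (\<chi> T S. if T = S then of_int (2 * int (card S) - int CARD('n)) else 0)"

definition mexp_diag :: "complex^'a^'a \<Rightarrow> complex^'a^'a" where
  "mexp_diag M = (\<chi> T S. if T = S then exp (M$S$S) else 0)"

definition Kfun :: "real \<Rightarrow> real \<Rightarrow> complex^'n \<Rightarrow> real" where
  "Kfun lam tau v = (if lam = 0 then exp (- tau * (norm v)^2)
     else inverse ((cosh (lam * tau)) ^ CARD('n)) * exp (- tanh (lam * tau) * (norm v)^2 / lam))"

definition KN :: "real \<Rightarrow> real \<Rightarrow> ('n::finite) symb" where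
  "KN lam tau v = Kfun lam tau v *\<^sub>R mexp_diag ((- (lam * tau)) *\<^sub>R Nop)"

definition cscale :: "complex \<Rightarrow> complex^'a^'b \<Rightarrow> complex^'a^'b" where
  "cscale c M = (\<chi> i j. c * M$i$j)"

text \<open>Moyal product on W_lambda (x) End(Lambda); for lambda /= 0 the oscillatory integral
  is given its standard meaning as the limit of Gaussian-regularized absolutely convergent integrals.\<close>
definition moyal :: "real \<Rightarrow> ('n::finite) symb \<Rightarrow> 'n symb \<Rightarrow> 'n symb" where
  "moyal lam a b x = (if lam = 0 then a x ** b x else
     Lim (at_right 0) (\<lambda>\<epsilon>::real. inverse ((lam * pi) ^ (2 * CARD('n))) *\<^sub>R
       (LINT p|lborel. cscale (exp (- \<epsilon> * ((norm (fst p))^2 + (norm (snd p))^2))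
                               * cis (2 / lam * omega (fst p) (snd p)))
                        (a (x + fst p) ** b (x + snd p)))))"

end

theory Submission
  imports Defs "HOL-Probability.Probability" "HOL-Real_Asymp.Real_Asymp"
begin

definition gq :: "real \<Rightarrow> complex \<Rightarrow> real \<Rightarrow> complex" where
  "gq a B t = exp (complex_of_real (- a * t\<^sup>2) + B * complex_of_real t)"

lemma norm_gq: "norm (gq a B t) = exp (- a * t\<^sup>2 + Re B * t)"
  by (simp add: gq_def norm_exp_eq_Re)

lemma exp_quad_normal:
  fixes a b t :: real
  assumes "a > 0"
  shows "exp (- a * t\<^sup>2 + b * t) = exp (b\<^sup>2 / (4*a)) * sqrt (pi / a) * normal_density (b/(2*a)) (sqrt (1/(2*a))) t"
proof -
  have sq: "(sqrt (1/(2*a)))\<^sup>2 = 1/(2*a)" using assms by simp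
  have "sqrt (2 * pi * (sqrt (1/(2*a)))\<^sup>2) = sqrt (pi / a)"
    unfolding sq using assms by simp
  moreover have "-(t - b/(2*a))\<^sup>2/ (2 * (sqrt (1/(2*a)))\<^sup>2) = - a * t\<^sup>2 + b * t - b\<^sup>2 / (4*a)"
    using assms by (simp add: field_simps power2_eq_square)
  ultimately show ?thesis using assms
    by (simp add: normal_density_def exp_diff)
qed

lemma integrable_exp_quad:
  fixes a b :: real
  assumes "a > 0"
  shows "integrable lborel (\<lambda>t. exp (- a * t\<^sup>2 + b * t))"
    and "integrable lborel (\<lambda>t. exp (- a * t\<^sup>2 + b * t) * \<bar>t\<bar>)"
proof -
  let ?m = "b/(2*a)" and ?s = "sqrt (1/(2*a))"
  let ?c = "exp (b\<^sup>2 / (4*a)) * sqrt (pi / a)"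
  show "integrable lborel (\<lambda>t. exp (- a * t\<^sup>2 + b * t))"
    unfolding exp_quad_normal[OF assms] by (rule integrable_mult_right, rule integrable_normal_density) (use assms in auto)
  have "integrable lborel (\<lambda>t. ?c * (normal_density ?m ?s t * \<bar>t - ?m\<bar>^1 + normal_density ?m ?s t * \<bar>?m\<bar>))"
    by (intro integrable_mult_right Bochner_Integration.integrable_add integrable_normal_moment_abs) (use assms in auto)
  then show "integrable lborel (\<lambda>t. exp (- a * t\<^sup>2 + b * t) * \<bar>t\<bar>)"
  proof (rule Bochner_Integration.integrable_bound)
    show "AE x in lborel. norm (exp (- a * x\<^sup>2 + b * x) * \<bar>x\<bar>) \<le> norm (?c * (normal_density ?m ?s x * \<bar>x - ?m\<bar>^1 + normal_density ?m ?s x * \<bar>?m\<bar>))"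
    proof (intro AE_I2)
      fix x
      let ?n = "normal_density ?m ?s x"
      have n0: "0 \<le> ?n" by simp
      have tri: "\<bar>x\<bar> \<le> \<bar>x - ?m\<bar> + \<bar>?m\<bar>" by linarith
      have "?n * \<bar>x\<bar> \<le> ?n * \<bar>x - ?m\<bar>^1 + ?n * \<bar>?m\<bar>"
        using mult_left_mono[OF tri n0] by (simp only: power_one_right distrib_left)
      then have le: "?c * (?n * \<bar>x\<bar>) \<le> ?c * (?n * \<bar>x - ?m\<bar>^1 + ?n * \<bar>?m\<bar>)"
        by (rule mult_left_mono) (use assms in simp)
      have e1: "norm (exp (- a * x\<^sup>2 + b * x) * \<bar>x\<bar>) = ?c * (?n * \<bar>x\<bar>)"
        unfolding exp_quad_normal[OF assms] using assms by (simp add: abs_mult)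
      have e2: "norm (?c * (?n * \<bar>x - ?m\<bar>^1 + ?n * \<bar>?m\<bar>)) = ?c * (?n * \<bar>x - ?m\<bar>^1 + ?n * \<bar>?m\<bar>)"
        using n0 assms unfolding real_norm_def by (intro abs_of_nonneg) simp
      show "norm (exp (- a * x\<^sup>2 + b * x) * \<bar>x\<bar>) \<le> norm (?c * (?n * \<bar>x - ?m\<bar>^1 + ?n * \<bar>?m\<bar>))"
        unfolding e1 e2 by (rule le)
    qed
  qed simp
qed

lemma integrable_gq:
  assumes "a > 0"
  shows "integrable lborel (gq a B)" and "integrable lborel (\<lambda>t. complex_of_real t * gq a B t)"
proof -
  show "integrable lborel (gq a B)"
    by (rule Bochner_Integration.integrable_bound[OF integrable_exp_quad(1)[OF assms, of "Re B"]])
       (auto simp: norm_gq gq_def[abs_def])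
  show "integrable lborel (\<lambda>t. complex_of_real t * gq a B t)"
    by (rule Bochner_Integration.integrable_bound[OF integrable_exp_quad(2)[OF assms, of "Re B"]])
       (auto simp: norm_gq gq_def[abs_def] norm_mult)
qed

lemma gq_deriv:
  "(gq a B has_vector_derivative (complex_of_real (-2*a*t) + B) * gq a B t) (at t)"
proof -
  have "((\<lambda>z. exp (- complex_of_real a * z\<^sup>2 + B * z)) has_field_derivative
      (- complex_of_real a * (2 * complex_of_real t) + B) * exp (- complex_of_real a * (complex_of_real t)\<^sup>2 + B * complex_of_real t))
      (at (complex_of_real t))"
    by (auto intro!: derivative_eq_intros)
  from has_vector_derivative_real_field[OF this]
  show ?thesis unfolding gq_def by (simp add: algebra_simps)
qed

lemma gq_tendsto:
  assumes "a > 0"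
  shows "(gq a B \<longlongrightarrow> 0) at_top" "(gq a B \<longlongrightarrow> 0) at_bot"
proof -
  have "((\<lambda>t. exp (- a * t\<^sup>2 + Re B * t)) \<longlongrightarrow> 0) at_top" using assms by real_asymp
  then show "(gq a B \<longlongrightarrow> 0) at_top"
    by (subst tendsto_norm_zero_iff[symmetric]) (simp add: norm_gq)
  have "((\<lambda>t. exp (- a * t\<^sup>2 + Re B * t)) \<longlongrightarrow> 0) at_bot" using assms by real_asymp
  then show "(gq a B \<longlongrightarrow> 0) at_bot"
    by (subst tendsto_norm_zero_iff[symmetric]) (simp add: norm_gq)
qed

lemma ibp_gq:
  assumes "a > 0"
  shows "integral\<^sup>L lborel (\<lambda>t. (complex_of_real (-2*a*t) + B) * gq a B t) = 0"
proof -
  let ?f = "\<lambda>t. (complex_of_real (-2*a*t) + B) * gq a B t"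
  have int: "integrable lborel ?f"
  proof -
    have "integrable lborel (\<lambda>t. complex_of_real (-2*a) * (complex_of_real t * gq a B t) + B * gq a B t)"
      using integrable_gq[OF assms] by (intro Bochner_Integration.integrable_add integrable_mult_right) auto
    then show ?thesis by (simp add: algebra_simps)
  qed
  have cont: "isCont ?f t" for t
    unfolding gq_def by (intro continuous_intros)
  have "(LBINT t=-\<infinity>..\<infinity>. ?f t) = 0 - 0"
  proof (rule interval_integral_FTC_integrable[where F="gq a B"])
    show "set_integrable lborel (einterval (- \<infinity>) \<infinity>) ?f"
      using int by (simp add: set_integrable_def)
    show "((gq a B \<circ> real_of_ereal) \<longlongrightarrow> 0) (at_right (- \<infinity>))"
      unfolding ereal_tendsto_simps using gq_tendsto[OF assms] by simp
    show "((gq a B \<circ> real_of_ereal) \<longlongrightarrow> 0) (at_left \<infinity>)"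
      unfolding ereal_tendsto_simps using gq_tendsto[OF assms] by simp
    show "\<And>x. - \<infinity> < ereal x \<Longrightarrow> ereal x < \<infinity> \<Longrightarrow> (gq a B has_vector_derivative ?f x) (at x)"
      by (rule gq_deriv)
    show "\<And>x. - \<infinity> < ereal x \<Longrightarrow> ereal x < \<infinity> \<Longrightarrow> isCont ?f x"
      by (rule cont)
  qed simp
  then show ?thesis
    by (simp add: interval_lebesgue_integral_def set_lebesgue_integral_def)
qed

lemma moment_gq:
  assumes "a > 0"
  shows "integral\<^sup>L lborel (\<lambda>t. complex_of_real t * gq a B t) = B / complex_of_real (2*a) * integral\<^sup>L lborel (gq a B)"
proof -
  have "0 = integral\<^sup>L lborel (\<lambda>t. complex_of_real (-2*a) * (complex_of_real t * gq a B t) + B * gq a B t)"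
    using ibp_gq[OF assms, of B] by (simp add: algebra_simps)
  also have "\<dots> = complex_of_real (-2*a) * integral\<^sup>L lborel (\<lambda>t. complex_of_real t * gq a B t) + B * integral\<^sup>L lborel (gq a B)"
    using integrable_gq[OF assms] by simp
  finally show ?thesis using assms by (simp add: field_simps)
qed

lemma ft_gq:
  assumes "a > 0"
  shows "integral\<^sup>L lborel (gq a (\<i> * complex_of_real w)) = complex_of_real (sqrt (pi / a) * exp (- w\<^sup>2 / (4*a)))"
proof -
  define c where "c = 1 / sqrt (2*a)"
  have c0: "c > 0" using assms by (simp add: c_def)
  have cc: "c\<^sup>2 = 1/(2*a)" using assms by (simp add: c_def power_divide)
  have "char std_normal_distribution (w*c) = complex_of_real (exp (- ((w*c)\<^sup>2) / 2))"
    by (simp add: char_std_normal_distribution)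
  then have 1: "integral\<^sup>L lborel (\<lambda>x. std_normal_density x *\<^sub>R iexp (w * c * x)) = complex_of_real (exp (- ((w*c)\<^sup>2) / 2))"
    unfolding char_def by (subst (asm) integral_density) auto
  have 2: "gq a (\<i> * complex_of_real w) (0 + c * x) = complex_of_real (sqrt (2*pi)) * (std_normal_density x *\<^sub>R iexp (w * c * x))" for x
  proof -
    have e: "- a * (c * x)\<^sup>2 = - x\<^sup>2 / 2" using assms cc by (simp add: power_mult_distrib field_simps)
    have "gq a (\<i> * complex_of_real w) (0 + c * x) = exp (complex_of_real (- a * (c * x)\<^sup>2) + \<i> * complex_of_real w * complex_of_real (c * x))"
      unfolding gq_def by simp
    also have "\<dots> = exp (complex_of_real (- x\<^sup>2 / 2) + \<i> * complex_of_real (w * c * x))"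
      unfolding e by (simp add: ac_simps)
    also have "\<dots> = complex_of_real (exp (- x\<^sup>2 / 2)) * iexp (w * c * x)"
      by (simp only: exp_add exp_of_real)
    finally show ?thesis
      by (simp add: std_normal_density_def scaleR_conv_of_real)
  qed
  have "integral\<^sup>L lborel (gq a (\<i> * complex_of_real w)) = \<bar>c\<bar> *\<^sub>R integral\<^sup>L lborel (\<lambda>x. gq a (\<i> * complex_of_real w) (0 + c * x))"
    using c0 by (intro lborel_integral_real_affine) simp
  also have "\<dots> = c *\<^sub>R (complex_of_real (sqrt (2*pi)) * complex_of_real (exp (- ((w*c)\<^sup>2) / 2)))"
    unfolding 2 integral_mult_right_zero 1 using c0 by simp
  also have "\<dots> = complex_of_real (sqrt (pi / a) * exp (- w\<^sup>2 / (4*a)))"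
  proof -
    have "c * sqrt (2*pi) = sqrt (pi / a)" using assms
      by (simp add: c_def real_sqrt_divide real_sqrt_mult field_simps)
    moreover have "- ((w*c)\<^sup>2) / 2 = - w\<^sup>2 / (4*a)" using cc assms
      by (simp add: power_mult_distrib field_simps)
    ultimately show ?thesis by (simp add: scaleR_conv_of_real mult.assoc[symmetric] of_real_mult[symmetric] del: of_real_mult)
  qed
  finally show ?thesis .
qed


lemma prod_basis_integral:
  fixes f :: "'a::euclidean_space \<Rightarrow> real \<Rightarrow> 'b::{real_normed_field,banach,second_countable_topology}"
  assumes int: "\<And>b. b \<in> Basis \<Longrightarrow> integrable lborel (f b)"
  shows "integrable lborel (\<lambda>u::'a. \<Prod>b\<in>Basis. f b (u \<bullet> b))"
    and "integral\<^sup>L lborel (\<lambda>u::'a. \<Prod>b\<in>Basis. f b (u \<bullet> b)) = (\<Prod>b\<in>Basis. integral\<^sup>L lborel (f b))"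
proof -
  interpret product_sigma_finite "\<lambda>_::'a. lborel :: real measure" by standard
  let ?T = "\<lambda>g. \<Sum>b\<in>(Basis::'a set). g b *\<^sub>R b"
  have T: "?T \<in> measurable (Pi\<^sub>M Basis (\<lambda>_. lborel)) borel" by measurable
  have fm: "b \<in> Basis \<Longrightarrow> f b \<in> borel_measurable borel" for b
    using int[of b] by auto
  have hm: "(\<lambda>u::'a. \<Prod>b\<in>Basis. f b (u \<bullet> b)) \<in> borel_measurable borel"
    using fm by (intro borel_measurable_prod) (auto intro: measurable_compose[OF _ fm])
  have eq: "(\<Prod>b\<in>Basis. f b (?T g \<bullet> b)) = (\<Prod>b\<in>Basis. f b (g b))" for g :: "'a \<Rightarrow> real"
    by (intro prod.cong refl) (simp add: inner_sum_left inner_Basis if_distrib sum.delta cong: if_cong)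
  show "integrable lborel (\<lambda>u::'a. \<Prod>b\<in>Basis. f b (u \<bullet> b))"
    unfolding lborel_eq[where 'a='a]
    by (subst integrable_distr_eq[OF T hm[unfolded lborel_eq[where 'a='a]]])
       (unfold eq, intro product_integrable_prod, auto intro: int)
  show "integral\<^sup>L lborel (\<lambda>u::'a. \<Prod>b\<in>Basis. f b (u \<bullet> b)) = (\<Prod>b\<in>Basis. integral\<^sup>L lborel (f b))"
    unfolding lborel_eq[where 'a='a]
    by (subst integral_distr[OF T hm[unfolded lborel_eq[where 'a='a]]])
       (unfold eq, intro product_integral_prod, auto intro: int)
qed


definition Gn :: "real \<Rightarrow> ('a \<Rightarrow> complex) \<Rightarrow> 'a::euclidean_space \<Rightarrow> complex" where
  "Gn a B u = (\<Prod>b\<in>Basis. gq a (B b) (u \<bullet> b))"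

lemma Gn_exp: "Gn a B u = exp (complex_of_real (- a * (norm u)\<^sup>2) + (\<Sum>b\<in>Basis. B b * complex_of_real (u \<bullet> b)))"
proof -
  have n: "(norm u)\<^sup>2 = (\<Sum>b\<in>Basis. (u \<bullet> b)\<^sup>2)"
    unfolding power2_norm_eq_inner by (subst euclidean_inner) (simp add: power2_eq_square)
  have "Gn a B u = exp (\<Sum>b\<in>Basis. complex_of_real (- a * (u \<bullet> b)\<^sup>2) + B b * complex_of_real (u \<bullet> b))"
    unfolding Gn_def gq_def by (rule exp_sum[symmetric, OF finite_Basis])
  also have "(\<Sum>b\<in>Basis. complex_of_real (- a * (u \<bullet> b)\<^sup>2) + B b * complex_of_real (u \<bullet> b))
     = complex_of_real (- a * (norm u)\<^sup>2) + (\<Sum>b\<in>Basis. B b * complex_of_real (u \<bullet> b))"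
    unfolding sum.distrib n sum_distrib_left of_real_sum by simp
  finally show ?thesis .
qed

lemma Gn_mom_prod:
  assumes "b0 \<in> Basis"
  shows "Gn a B u * complex_of_real (u \<bullet> b0) =
    (\<Prod>b\<in>Basis. (if b = b0 then (\<lambda>t. complex_of_real t * gq a (B b) t) else gq a (B b)) (u \<bullet> b))"
proof -
  have "(\<Prod>b\<in>Basis. (if b = b0 then (\<lambda>t. complex_of_real t * gq a (B b) t) else gq a (B b)) (u \<bullet> b))
     = complex_of_real (u \<bullet> b0) * gq a (B b0) (u \<bullet> b0) * (\<Prod>b\<in>Basis - {b0}. gq a (B b) (u \<bullet> b))"
    using assms by (subst prod.remove[of _ b0]) (auto intro!: prod.cong)
  moreover have "Gn a B u = gq a (B b0) (u \<bullet> b0) * (\<Prod>b\<in>Basis - {b0}. gq a (B b) (u \<bullet> b))"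
    unfolding Gn_def using assms by (subst prod.remove[of _ b0]) auto
  ultimately show ?thesis by simp
qed

lemma integrable_Gn:
  assumes "a > 0"
  shows "integrable lborel (Gn a B :: 'a::euclidean_space \<Rightarrow> complex)"
  unfolding Gn_def[abs_def]
  by (rule prod_basis_integral(1)[of "\<lambda>b. gq a (B b)"]) (rule integrable_gq(1)[OF assms])

lemma integrable_Gn_mom:
  assumes "a > 0" "b0 \<in> Basis"
  shows "integrable lborel (\<lambda>u::'a::euclidean_space. Gn a B u * complex_of_real (u \<bullet> b0))"
  unfolding Gn_mom_prod[OF assms(2)]
  by (rule prod_basis_integral(1)) (auto intro: integrable_gq[OF assms(1)])

lemma mom_Gn:
  assumes "a > 0" "b0 \<in> Basis"
  shows "integral\<^sup>L lborel (\<lambda>u::'a::euclidean_space. Gn a B u * complex_of_real (u \<bullet> b0))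
     = B b0 / complex_of_real (2*a) * integral\<^sup>L lborel (Gn a B)"
proof -
  have "integral\<^sup>L lborel (\<lambda>u::'a. Gn a B u * complex_of_real (u \<bullet> b0))
     = (\<Prod>b\<in>Basis. integral\<^sup>L lborel (if b = b0 then (\<lambda>t. complex_of_real t * gq a (B b) t) else gq a (B b)))"
    unfolding Gn_mom_prod[OF assms(2)]
    by (rule prod_basis_integral(2)) (auto intro: integrable_gq[OF assms(1)])
  also have "\<dots> = integral\<^sup>L lborel (\<lambda>t. complex_of_real t * gq a (B b0) t) * (\<Prod>b\<in>Basis - {b0}. integral\<^sup>L lborel (gq a (B b)))"
    using assms by (subst prod.remove[of _ b0]) (auto intro!: prod.cong)
  also have "\<dots> = B b0 / complex_of_real (2*a) * (integral\<^sup>L lborel (gq a (B b0)) * (\<Prod>b\<in>Basis - {b0}. integral\<^sup>L lborel (gq a (B b))))"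
    unfolding moment_gq[OF assms(1)] by simp
  also have "integral\<^sup>L lborel (gq a (B b0)) * (\<Prod>b\<in>Basis - {b0}. integral\<^sup>L lborel (gq a (B b))) = (\<Prod>b\<in>Basis. integral\<^sup>L lborel (gq a (B b)))"
    using assms by (subst prod.remove[of _ b0]) auto
  also have "\<dots> = integral\<^sup>L lborel (Gn a B)"
    unfolding Gn_def[abs_def]
    by (rule prod_basis_integral(2)[symmetric]) (rule integrable_gq(1)[OF assms(1)])
  finally show ?thesis .
qed

lemma inner_expand: "complex_of_real (u \<bullet> v) = (\<Sum>b\<in>Basis. complex_of_real (v \<bullet> b) * complex_of_real (u \<bullet> b))"
  by (simp add: euclidean_inner[of u v] mult.commute flip: of_real_mult of_real_sum)

lemma integrable_Gn_momv:
  assumes "a > 0"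
  shows "integrable lborel (\<lambda>u::'a::euclidean_space. Gn a B u * complex_of_real (u \<bullet> v))"
proof -
  have "integrable lborel (\<lambda>u::'a. \<Sum>b\<in>Basis. complex_of_real (v \<bullet> b) * (Gn a B u * complex_of_real (u \<bullet> b)))"
    by (intro Bochner_Integration.integrable_sum integrable_mult_right integrable_Gn_mom assms)
  then show ?thesis
    by (subst inner_expand) (simp add: sum_distrib_left algebra_simps)
qed

lemma mom_Gn_v:
  assumes "a > 0"
  shows "integral\<^sup>L lborel (\<lambda>u::'a::euclidean_space. Gn a B u * complex_of_real (u \<bullet> v))
     = (\<Sum>b\<in>Basis. complex_of_real (v \<bullet> b) * B b) / complex_of_real (2*a) * integral\<^sup>L lborel (Gn a B)"
proof -
  have "integral\<^sup>L lborel (\<lambda>u::'a. Gn a B u * complex_of_real (u \<bullet> v))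
      = integral\<^sup>L lborel (\<lambda>u::'a. \<Sum>b\<in>Basis. complex_of_real (v \<bullet> b) * (Gn a B u * complex_of_real (u \<bullet> b)))"
    by (subst inner_expand) (simp add: sum_distrib_left algebra_simps)
  also have "\<dots> = (\<Sum>b\<in>Basis. integral\<^sup>L lborel (\<lambda>u::'a. complex_of_real (v \<bullet> b) * (Gn a B u * complex_of_real (u \<bullet> b))))"
    by (rule Bochner_Integration.integral_sum) (intro integrable_mult_right integrable_Gn_mom assms)
  also have "\<dots> = (\<Sum>b\<in>Basis. complex_of_real (v \<bullet> b) * integral\<^sup>L lborel (\<lambda>u::'a. Gn a B u * complex_of_real (u \<bullet> b)))"
    by (simp only: integral_mult_right_zero)
  also have "\<dots> = (\<Sum>b\<in>Basis. complex_of_real (v \<bullet> b) * (B b / complex_of_real (2*a) * integral\<^sup>L lborel (Gn a B)))"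
    using assms by (intro sum.cong refl) (simp add: mom_Gn)
  finally show ?thesis by (simp add: sum_distrib_left sum_divide_distrib algebra_simps)
qed

lemma ft_Gn:
  assumes "a > 0"
  shows "integral\<^sup>L lborel (Gn a (\<lambda>b. \<i> * complex_of_real (w b)) :: 'a::euclidean_space \<Rightarrow> complex)
     = (\<Prod>b\<in>Basis. complex_of_real (sqrt (pi / a) * exp (- (w b)\<^sup>2 / (4*a))))"
  unfolding Gn_def[abs_def]
  by (subst prod_basis_integral(2)) (auto intro: integrable_gq(1)[OF assms] simp: ft_gq[OF assms])


lemma inner_sum_basis_c: "(\<Sum>b\<in>Basis. complex_of_real (v \<bullet> b) * complex_of_real (u \<bullet> b)) = complex_of_real (u \<bullet> v)"
  by (rule inner_expand[symmetric])

lemma norm_sq_basis: "(\<Sum>b\<in>Basis. (u \<bullet> b)\<^sup>2) = (norm u)\<^sup>2"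
  unfolding power2_norm_eq_inner by (subst (2) euclidean_inner) (simp add: power2_eq_square)

locale core =
  fixes eps s beta :: real and x :: "'a::euclidean_space" and rho rho' :: "'a \<Rightarrow> 'a"
  assumes eps: "eps > 0" and beta: "beta > 0" and s: "s \<noteq> 0"
    and adj: "\<And>w v. rho w \<bullet> v = w \<bullet> rho' v" and iso: "\<And>w. norm (rho w) = norm w"
    and lin: "bounded_linear rho"
begin

definition Fq :: "'a \<times> 'a \<Rightarrow> complex" where
  "Fq p = complex_of_real (exp (- eps * ((norm (fst p))\<^sup>2 + (norm (snd p))\<^sup>2))) * cis (s * (fst p \<bullet> rho (snd p)))
     * complex_of_real (exp (- beta * (norm (x + snd p))\<^sup>2))"

definition K0 :: real where "K0 = sqrt (pi / eps) ^ DIM('a)"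
definition alpha :: real where "alpha = eps + s\<^sup>2 / (4 * eps)"
definition Bx :: "'a \<Rightarrow> complex" where "Bx b = complex_of_real (- 2 * beta * (x \<bullet> b))"
definition Zc :: complex where "Zc = integral\<^sup>L lborel (Gn (alpha + beta) Bx)"

lemma alpha_pos: "alpha > 0"
  using eps by (simp add: alpha_def add_pos_nonneg)

lemma Fq_inner: "Fq (u, w) = complex_of_real (exp (- eps * (norm w)\<^sup>2) * exp (- beta * (norm (x + w))\<^sup>2))
   * Gn eps (\<lambda>b. \<i> * complex_of_real (s * (rho w \<bullet> b))) u"
proof -
  have "(\<Sum>b\<in>Basis. \<i> * complex_of_real (s * (rho w \<bullet> b)) * complex_of_real (u \<bullet> b))
      = \<i> * complex_of_real s * (\<Sum>b\<in>Basis. complex_of_real (rho w \<bullet> b) * complex_of_real (u \<bullet> b))"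
    by (simp add: sum_distrib_left algebra_simps)
  also have "\<dots> = \<i> * complex_of_real (s * (u \<bullet> rho w))"
    unfolding inner_sum_basis_c by simp
  finally have sumeq: "(\<Sum>b\<in>Basis. \<i> * complex_of_real (s * (rho w \<bullet> b)) * complex_of_real (u \<bullet> b))
      = \<i> * complex_of_real (s * (u \<bullet> rho w))" .
  have "Gn eps (\<lambda>b. \<i> * complex_of_real (s * (rho w \<bullet> b))) u
     = exp (complex_of_real (- eps * (norm u)\<^sup>2) + \<i> * complex_of_real (s * (u \<bullet> rho w)))"
    unfolding Gn_exp sumeq ..
  also have "\<dots> = complex_of_real (exp (- eps * (norm u)\<^sup>2)) * cis (s * (u \<bullet> rho w))"
    by (simp only: exp_add cis_conv_exp exp_of_real)
  finally have "Gn eps (\<lambda>b. \<i> * complex_of_real (s * (rho w \<bullet> b))) u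
     = complex_of_real (exp (- eps * (norm u)\<^sup>2)) * cis (s * (u \<bullet> rho w))" .
  moreover have e: "exp (- eps * ((norm u)\<^sup>2 + (norm w)\<^sup>2)) = exp (- eps * (norm u)\<^sup>2) * exp (- eps * (norm w)\<^sup>2)"
    by (simp add: distrib_left flip: exp_add)
  ultimately show ?thesis
    unfolding Fq_def fst_conv snd_conv e by (simp only: of_real_mult ac_simps)
qed

lemma inner_int:
  "integral\<^sup>L lborel (\<lambda>u. Fq (u, w)) = complex_of_real (exp (- eps * (norm w)\<^sup>2) * exp (- beta * (norm (x + w))\<^sup>2)
     * K0 * exp (- s\<^sup>2 * (norm w)\<^sup>2 / (4 * eps)))"
proof -
  have "integral\<^sup>L lborel (Gn eps (\<lambda>b. \<i> * complex_of_real (s * (rho w \<bullet> b))) :: 'a \<Rightarrow> complex)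
     = (\<Prod>b\<in>Basis. complex_of_real (sqrt (pi / eps) * exp (- (s * (rho w \<bullet> b))\<^sup>2 / (4*eps))))"
    by (rule ft_Gn[OF eps])
  also have "\<dots> = complex_of_real (K0 * exp (- s\<^sup>2 * (norm w)\<^sup>2 / (4 * eps)))"
  proof -
    have "(\<Prod>b\<in>Basis. sqrt (pi / eps) * exp (- (s * (rho w \<bullet> b))\<^sup>2 / (4*eps)))
        = K0 * exp (\<Sum>b\<in>Basis. - (s * (rho w \<bullet> b))\<^sup>2 / (4*eps))"
      unfolding prod.distrib K0_def prod_constant exp_sum[OF finite_Basis] by simp
    also have "(\<Sum>b\<in>Basis. - (s * (rho w \<bullet> b))\<^sup>2 / (4*eps)) = - s\<^sup>2 * (norm w)\<^sup>2 / (4 * eps)"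
      unfolding power_mult_distrib sum_divide_distrib[symmetric] sum_negf
        sum_distrib_left[symmetric] norm_sq_basis iso by simp
    finally have R: "(\<Prod>b\<in>Basis. sqrt (pi / eps) * exp (- (s * (rho w \<bullet> b))\<^sup>2 / (4*eps))) = K0 * exp (- s\<^sup>2 * (norm w)\<^sup>2 / (4 * eps))" .
    show ?thesis unfolding of_real_prod[symmetric] R ..
  qed
  finally show ?thesis
    unfolding Fq_inner integral_mult_right_zero by simp
qed

lemma inner_int_mom:
  "integral\<^sup>L lborel (\<lambda>u. Fq (u, w) * complex_of_real (u \<bullet> v)) =
    \<i> * complex_of_real s * complex_of_real (rho w \<bullet> v) / complex_of_real (2 * eps) * integral\<^sup>L lborel (\<lambda>u. Fq (u, w))"
proof -
  let ?B = "\<lambda>b. \<i> * complex_of_real (s * (rho w \<bullet> b))"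
  let ?c = "complex_of_real (exp (- eps * (norm w)\<^sup>2) * exp (- beta * (norm (x + w))\<^sup>2))"
  have "integral\<^sup>L lborel (\<lambda>u. Fq (u, w) * complex_of_real (u \<bullet> v)) = ?c * integral\<^sup>L lborel (\<lambda>u. Gn eps ?B u * complex_of_real (u \<bullet> v))"
    unfolding Fq_inner by (simp add: mult.assoc)
  also have "\<dots> = ?c * ((\<Sum>b\<in>Basis. complex_of_real (v \<bullet> b) * ?B b) / complex_of_real (2*eps) * integral\<^sup>L lborel (Gn eps ?B))"
    by (simp add: mom_Gn_v[OF eps])
  also have "(\<Sum>b\<in>Basis. complex_of_real (v \<bullet> b) * ?B b) = \<i> * complex_of_real s * complex_of_real (rho w \<bullet> v)"
  proof -
    have "(\<Sum>b\<in>Basis. complex_of_real (v \<bullet> b) * ?B b) = \<i> * complex_of_real s * (\<Sum>b\<in>Basis. complex_of_real (v \<bullet> b) * complex_of_real (rho w \<bullet> b))"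
      by (simp add: sum_distrib_left algebra_simps)
    then show ?thesis by (simp only: inner_sum_basis_c)
  qed
  finally show ?thesis
    unfolding Fq_inner integral_mult_right_zero by (simp add: algebra_simps)
qed

lemma Gn_zero: "Gn a (\<lambda>b. 0) u = complex_of_real (exp (- a * (norm u)\<^sup>2))"
  unfolding Gn_exp by (simp only: mult_zero_left sum.neutral_const add_0_right exp_of_real)

lemma Gn_zero': "Gn a (\<lambda>b. \<i> * complex_of_real 0) u = complex_of_real (exp (- a * (norm u)\<^sup>2))"
  unfolding Gn_exp by (simp only: of_real_0 mult_zero_right mult_zero_left sum.neutral_const add_0_right exp_of_real)

lemma Fq_norm: "norm (Fq p) \<le> norm (Gn eps (\<lambda>b. 0) p)"
proof -
  have np: "(norm p)\<^sup>2 = (norm (fst p))\<^sup>2 + (norm (snd p))\<^sup>2"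
    by (cases p) (simp add: norm_Pair)
  have "norm (Fq p) = exp (- eps * ((norm (fst p))\<^sup>2 + (norm (snd p))\<^sup>2)) * exp (- beta * (norm (x + snd p))\<^sup>2)"
    unfolding Fq_def by (simp add: norm_mult)
  also have "\<dots> \<le> exp (- eps * ((norm (fst p))\<^sup>2 + (norm (snd p))\<^sup>2)) * 1"
    using beta by (intro mult_left_mono) auto
  finally show ?thesis unfolding Gn_zero np by simp
qed

lemma Fq_cont: "continuous_on UNIV Fq"
proof -
  have cr: "continuous_on UNIV rho" by (rule linear_continuous_on[OF lin])
  show ?thesis unfolding Fq_def[abs_def]
    by (intro continuous_intros continuous_on_compose2[OF cr]) auto
qed

lemma Fq_meas[measurable]: "Fq \<in> borel_measurable borel"
  by (rule borel_measurable_continuous_onI[OF Fq_cont])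

lemma integrable_Fq: "integrable lborel Fq"
  by (rule Bochner_Integration.integrable_bound[OF integrable_Gn[OF eps, of "\<lambda>b. 0"]])
     (auto intro: Fq_norm)

lemma integrable_Fq_mom: "integrable lborel (\<lambda>p. Fq p * complex_of_real (fst p \<bullet> v))"
proof (rule Bochner_Integration.integrable_bound[OF integrable_Gn_momv[OF eps, of "\<lambda>b. 0" "(v, 0)"]])
  show "(\<lambda>p. Fq p * complex_of_real (fst p \<bullet> v)) \<in> borel_measurable lborel"
    unfolding measurable_lborel2 by (rule borel_measurable_continuous_onI) (intro continuous_intros Fq_cont)
  show "AE p in lborel. norm (Fq p * complex_of_real (fst p \<bullet> v)) \<le> norm (Gn eps (\<lambda>b. 0) p * complex_of_real (p \<bullet> (v, 0)))"
    using Fq_norm by (auto simp: norm_mult inner_Pair_0 intro!: mult_right_mono)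
qed

lemma fubini_Fq:
  assumes "integrable lborel (g :: 'a \<times> 'a \<Rightarrow> complex)"
  shows "integral\<^sup>L lborel g = integral\<^sup>L lborel (\<lambda>w. integral\<^sup>L lborel (\<lambda>u. g (u, w)))"
proof -
  have "integrable (lborel \<Otimes>\<^sub>M lborel) (case_prod (\<lambda>u w. g (u, w)))"
    using assms by (simp add: lborel_prod)
  from lborel_pair.integral_snd[OF this] show ?thesis
    by (simp add: lborel_prod)
qed

lemma outer_eq:
  "exp (- eps * (norm w)\<^sup>2) * exp (- beta * (norm (x + w))\<^sup>2) * K0 * exp (- s\<^sup>2 * (norm w)\<^sup>2 / (4 * eps))
   = K0 * exp (- beta * (norm x)\<^sup>2) * exp (- (alpha + beta) * (norm w)\<^sup>2 - 2 * beta * (x \<bullet> w))"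
proof -
  have n: "(norm (x + w))\<^sup>2 = (norm x)\<^sup>2 + 2 * (x \<bullet> w) + (norm w)\<^sup>2"
    by (simp add: power2_norm_eq_inner inner_add_left inner_add_right inner_commute)
  have "- eps * (norm w)\<^sup>2 + - beta * (norm (x + w))\<^sup>2 + - s\<^sup>2 * (norm w)\<^sup>2 / (4 * eps)
     = - beta * (norm x)\<^sup>2 + (- (alpha + beta) * (norm w)\<^sup>2 - 2 * beta * (x \<bullet> w))"
    unfolding n alpha_def using eps by (simp add: field_simps)
  then have E: "exp (- eps * (norm w)\<^sup>2 + - beta * (norm (x + w))\<^sup>2 + - s\<^sup>2 * (norm w)\<^sup>2 / (4 * eps))
     = exp (- beta * (norm x)\<^sup>2 + (- (alpha + beta) * (norm w)\<^sup>2 - 2 * beta * (x \<bullet> w)))" by simp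
  have "exp (- eps * (norm w)\<^sup>2) * exp (- beta * (norm (x + w))\<^sup>2) * K0 * exp (- s\<^sup>2 * (norm w)\<^sup>2 / (4 * eps))
     = K0 * exp (- eps * (norm w)\<^sup>2 + - beta * (norm (x + w))\<^sup>2 + - s\<^sup>2 * (norm w)\<^sup>2 / (4 * eps))"
    by (simp only: exp_add mult_ac)
  also have "\<dots> = K0 * exp (- beta * (norm x)\<^sup>2 + (- (alpha + beta) * (norm w)\<^sup>2 - 2 * beta * (x \<bullet> w)))"
    unfolding E ..
  also have "\<dots> = K0 * exp (- beta * (norm x)\<^sup>2) * exp (- (alpha + beta) * (norm w)\<^sup>2 - 2 * beta * (x \<bullet> w))"
    by (simp only: exp_add mult_ac)
  finally show ?thesis .
qed

lemma Gn_Bx: "Gn (alpha + beta) Bx w = complex_of_real (exp (- (alpha + beta) * (norm w)\<^sup>2 - 2 * beta * (x \<bullet> w)))"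
proof -
  have "(\<Sum>b\<in>Basis. Bx b * complex_of_real (w \<bullet> b)) = complex_of_real (- 2 * beta) * (\<Sum>b\<in>Basis. complex_of_real (x \<bullet> b) * complex_of_real (w \<bullet> b))"
    unfolding Bx_def by (simp add: sum_distrib_left algebra_simps)
  also have "\<dots> = complex_of_real (- 2 * beta * (w \<bullet> x))"
    unfolding inner_sum_basis_c by simp
  finally have sumeq: "(\<Sum>b\<in>Basis. Bx b * complex_of_real (w \<bullet> b)) = complex_of_real (- 2 * beta * (w \<bullet> x))" .
  have "Gn (alpha + beta) Bx w = exp (complex_of_real (- (alpha + beta) * (norm w)\<^sup>2) + complex_of_real (- 2 * beta * (w \<bullet> x)))"
    unfolding Gn_exp sumeq ..
  also have "\<dots> = complex_of_real (exp (- (alpha + beta) * (norm w)\<^sup>2 + - 2 * beta * (w \<bullet> x)))"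
    by (simp only: of_real_add[symmetric] exp_of_real)
  finally show ?thesis by (simp add: inner_commute)
qed

lemma inner_int':
  "integral\<^sup>L lborel (\<lambda>u. Fq (u, w)) = complex_of_real (K0 * exp (- beta * (norm x)\<^sup>2)) * Gn (alpha + beta) Bx w"
  unfolding inner_int outer_eq Gn_Bx by simp

definition Pc :: complex where "Pc = integral\<^sup>L lborel Fq"

lemma Pc_eq: "Pc = complex_of_real (K0 * exp (- beta * (norm x)\<^sup>2)) * Zc"
  unfolding Pc_def fubini_Fq[OF integrable_Fq] inner_int' Zc_def by simp

definition kap :: complex where "kap = \<i> * complex_of_real (s / (2 * eps) * (- beta / (alpha + beta)))"

lemma mom_Fq: "integral\<^sup>L lborel (\<lambda>p. Fq p * complex_of_real (fst p \<bullet> v)) = kap * complex_of_real (rho x \<bullet> v) * Pc"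
proof -
  let ?C = "complex_of_real (K0 * exp (- beta * (norm x)\<^sup>2))"
  have "integral\<^sup>L lborel (\<lambda>p. Fq p * complex_of_real (fst p \<bullet> v))
     = integral\<^sup>L lborel (\<lambda>w. \<i> * complex_of_real s / complex_of_real (2 * eps) * ?C * (Gn (alpha + beta) Bx w * complex_of_real (w \<bullet> rho' v)))"
    unfolding fubini_Fq[OF integrable_Fq_mom] fst_conv inner_int_mom inner_int' adj
    by (simp add: algebra_simps)
  also have "\<dots> = \<i> * complex_of_real s / complex_of_real (2 * eps) * ?C * integral\<^sup>L lborel (\<lambda>w. Gn (alpha + beta) Bx w * complex_of_real (w \<bullet> rho' v))"
    by (rule integral_mult_right_zero)
  also have "integral\<^sup>L lborel (\<lambda>w. Gn (alpha + beta) Bx w * complex_of_real (w \<bullet> rho' v))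
     = (\<Sum>b\<in>Basis. complex_of_real (rho' v \<bullet> b) * Bx b) / complex_of_real (2 * (alpha + beta)) * Zc"
    unfolding Zc_def using alpha_pos beta by (intro mom_Gn_v) simp
  also have "(\<Sum>b\<in>Basis. complex_of_real (rho' v \<bullet> b) * Bx b) = complex_of_real (- 2 * beta) * complex_of_real (rho x \<bullet> v)"
  proof -
    have "(\<Sum>b\<in>Basis. complex_of_real (rho' v \<bullet> b) * Bx b) = complex_of_real (- 2 * beta) * (\<Sum>b\<in>Basis. complex_of_real (rho' v \<bullet> b) * complex_of_real (x \<bullet> b))"
      unfolding Bx_def by (simp add: sum_distrib_left algebra_simps)
    then show ?thesis unfolding inner_sum_basis_c adj .
  qed
  finally show ?thesis
    unfolding Pc_eq kap_def using eps alpha_pos beta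
    by (simp add: field_simps)
qed

lemma gauss_int_real:
  assumes g: "g > 0"
  shows "integrable lborel (\<lambda>w::'a. exp (- g * (norm w)\<^sup>2))"
    and "integral\<^sup>L lborel (\<lambda>w::'a. exp (- g * (norm w)\<^sup>2)) = sqrt (pi / g) ^ DIM('a)"
proof -
  have n: "norm (Gn g (\<lambda>b. 0) w) = exp (- g * (norm w)\<^sup>2)" for w :: 'a
    unfolding Gn_zero by simp
  show i: "integrable lborel (\<lambda>w::'a. exp (- g * (norm w)\<^sup>2))"
  proof -
    have "integrable lborel (Gn g (\<lambda>b. 0) :: 'a \<Rightarrow> complex)" by (rule integrable_Gn[OF g])
    from integrable_norm[OF this] show ?thesis by (simp only: n)
  qed
  have "complex_of_real (integral\<^sup>L lborel (\<lambda>w::'a. exp (- g * (norm w)\<^sup>2)))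
      = integral\<^sup>L lborel (Gn g (\<lambda>b. \<i> * complex_of_real 0) :: 'a \<Rightarrow> complex)"
    unfolding Gn_zero' by simp
  also have "\<dots> = (\<Prod>b\<in>(Basis::'a set). complex_of_real (sqrt (pi / g) * exp (- 0\<^sup>2 / (4*g))))"
    by (rule ft_Gn[OF g])
  also have "\<dots> = complex_of_real (sqrt (pi / g) ^ DIM('a))"
    by (simp add: prod_constant)
  finally show "integral\<^sup>L lborel (\<lambda>w::'a. exp (- g * (norm w)\<^sup>2)) = sqrt (pi / g) ^ DIM('a)"
    by (simp only: of_real_eq_iff)
qed

lemma Pc_bound: "norm Pc \<le> (2 * pi / \<bar>s\<bar>) ^ DIM('a)"
proof -
  define g where "g = s\<^sup>2 / (4 * eps)"
  have g: "g > 0" using s eps by (simp add: g_def)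
  have K0: "K0 \<ge> 0" unfolding K0_def using eps by simp
  have "norm Pc = norm (integral\<^sup>L lborel (\<lambda>w. integral\<^sup>L lborel (\<lambda>u. Fq (u, w))))"
    unfolding Pc_def fubini_Fq[OF integrable_Fq] ..
  also have "\<dots> \<le> integral\<^sup>L lborel (\<lambda>w. norm (integral\<^sup>L lborel (\<lambda>u. Fq (u, w))))"
    by (rule integral_norm_bound)
  also have "\<dots> \<le> integral\<^sup>L lborel (\<lambda>w::'a. K0 * exp (- g * (norm w)\<^sup>2))"
  proof (rule integral_mono)
    show "integrable lborel (\<lambda>w. norm (integral\<^sup>L lborel (\<lambda>u. Fq (u, w))))"
      unfolding inner_int' by (intro integrable_norm integrable_mult_right integrable_Gn) (use alpha_pos beta in simp)
    show "integrable lborel (\<lambda>w::'a. K0 * exp (- g * (norm w)\<^sup>2))"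
      by (intro integrable_mult_right gauss_int_real(1)[OF g])
    fix w :: 'a
    have "norm (integral\<^sup>L lborel (\<lambda>u. Fq (u, w))) = (exp (- eps * (norm w)\<^sup>2) * exp (- beta * (norm (x + w))\<^sup>2)) * (K0 * exp (- g * (norm w)\<^sup>2))"
      unfolding inner_int g_def using K0 by (simp add: abs_mult norm_mult)
    also have "\<dots> \<le> 1 * (K0 * exp (- g * (norm w)\<^sup>2))"
    proof (rule mult_right_mono)
      have "exp (- eps * (norm w)\<^sup>2) \<le> 1" "exp (- beta * (norm (x + w))\<^sup>2) \<le> 1"
        using eps beta by auto
      then show "exp (- eps * (norm w)\<^sup>2) * exp (- beta * (norm (x + w))\<^sup>2) \<le> 1"
        by (simp add: mult_le_one)
    qed (use K0 in simp)
    finally show "norm (integral\<^sup>L lborel (\<lambda>u. Fq (u, w))) \<le> K0 * exp (- g * (norm w)\<^sup>2)" by simp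
  qed
  also have "\<dots> = K0 * sqrt (pi / g) ^ DIM('a)"
    unfolding integral_mult_right_zero gauss_int_real(2)[OF g] ..
  also have "\<dots> = (2 * pi / \<bar>s\<bar>) ^ DIM('a)"
  proof -
    have "sqrt (pi / eps) * sqrt (pi / g) = sqrt ((2 * pi / \<bar>s\<bar>)\<^sup>2)"
      unfolding real_sqrt_mult[symmetric] g_def using eps s
      by (simp add: field_simps power2_eq_square)
    also have "\<dots> = 2 * pi / \<bar>s\<bar>" by simp
    finally show ?thesis unfolding K0_def power_mult_distrib[symmetric] by simp
  qed
  finally show ?thesis .
qed

end


lemma cscaleR: "r *\<^sub>R (z::complex) = complex_of_real r * z"
  by (simp add: scaleR_conv_of_real)

lemma cscale_zero_right: "cscale c 0 = 0"
  by (simp add: vec_eq_iff cscale_def)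

lemma cscale_nth[simp]: "cscale c M $ i $ j = c * M $ i $ j"
  by (simp add: cscale_def)

lemma cscale_add_left: "cscale (a + b) M = cscale a M + cscale b M"
  by (simp add: vec_eq_iff distrib_right)
lemma cscale_add_right: "cscale c (M + N) = cscale c M + cscale c N"
  by (simp add: vec_eq_iff distrib_left)
lemma cscale_diff_right: "cscale c (M - N) = cscale c M - cscale c N"
  by (simp add: vec_eq_iff right_diff_distrib)
lemma cscale_scaleR: "cscale c (r *\<^sub>R M) = cscale (c * complex_of_real r) M"
  by (simp add: vec_eq_iff cscaleR)
lemma cscale_mult: "cscale (a * b) M = cscale a (cscale b M)"
  by (simp add: vec_eq_iff)
lemma cscale_one: "cscale 1 M = M"
  by (simp add: vec_eq_iff)
lemma cscale_zero: "cscale 0 M = 0"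
  by (simp add: vec_eq_iff)
lemma cscale_sum: "cscale c (\<Sum>i\<in>I. M i) = (\<Sum>i\<in>I. cscale c (M i))"
  by (induction I rule: infinite_finite_induct) (auto simp: cscale_add_right cscale_zero_right)

lemma linear_cscale_left: "linear (\<lambda>c. cscale c M)"
  by (rule linearI) (simp_all add: cscale_add_left vec_eq_iff cscaleR)

lemma bounded_linear_cscale_left: "bounded_linear (\<lambda>c. cscale c (M::complex^'a::finite^'b::finite))"
  using linear_cscale_left linear_conv_bounded_linear by blast

lemma mm_add_left: "((A::'a::semiring_1^'m::finite^'n::finite) + B) ** C = A ** C + B ** C"
  by (simp add: matrix_matrix_mult_def vec_eq_iff distrib_right sum.distrib)
lemma mm_diff_left: "((A::'a::ring_1^'m::finite^'n::finite) - B) ** C = A ** C - B ** C"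
  by (simp add: matrix_matrix_mult_def vec_eq_iff left_diff_distrib sum_subtractf)
lemma mm_scaleR_left: "((r::real) *\<^sub>R (A::complex^'m::finite^'n::finite)) ** C = r *\<^sub>R (A ** C)"
  by (simp add: matrix_matrix_mult_def vec_eq_iff cscaleR sum_distrib_left mult.assoc)
lemma mm_scaleR_right: "(A::complex^'m::finite^'n::finite) ** ((r::real) *\<^sub>R C) = r *\<^sub>R (A ** C)"
  by (simp add: matrix_matrix_mult_def vec_eq_iff cscaleR sum_distrib_left mult_ac)
lemma mm_cscale_left: "(cscale c (A::complex^'m::finite^'n::finite)) ** C = cscale c (A ** C)"
  by (simp add: matrix_matrix_mult_def vec_eq_iff sum_distrib_left mult.assoc cscale_def)
lemma mm_cscale_right: "(A::complex^'m::finite^'n::finite) ** (cscale c C) = cscale c (A ** C)"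
  by (simp add: matrix_matrix_mult_def vec_eq_iff sum_distrib_left mult_ac cscale_def)

lemma ext_mult_add: "ext_mult (x + y) = ext_mult x + ext_mult y"
  unfolding ext_mult_def by (auto simp: vec_eq_iff sum.distrib[symmetric] distrib_right intro!: sum.cong)

lemma ext_mult_scaleR: "ext_mult (r *\<^sub>R x) = r *\<^sub>R ext_mult x"
  unfolding ext_mult_def by (simp add: vec_eq_iff cscaleR sum_distrib_left if_distrib mult.assoc cong: if_cong)

lemma contr_add: "contr (x + y) = contr x + contr y"
  unfolding contr_def by (auto simp: vec_eq_iff sum.distrib[symmetric] distrib_right intro!: sum.cong)

lemma contr_scaleR: "contr (r *\<^sub>R x) = r *\<^sub>R contr x"
  unfolding contr_def by (simp add: vec_eq_iff cscaleR sum_distrib_left if_distrib mult.assoc cong: if_cong)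

lemma linear_cliff: "linear cliff"
  by (rule linearI) (simp_all add: cliff_def ext_mult_add contr_add ext_mult_scaleR contr_scaleR scaleR_add_right)

definition rotm :: "complex \<Rightarrow> complex^'n \<Rightarrow> complex^'n" where
  "rotm c w = (\<chi> k. c * w $ k)"

lemma ext_mult_rotm: "ext_mult (rotm c x) = cscale c (ext_mult x)"
  unfolding ext_mult_def rotm_def by (simp add: vec_eq_iff sum_distrib_left if_distrib mult.assoc cong: if_cong)

lemma contr_rotm: "contr (rotm c x) = cscale (cnj c) (contr x)"
  unfolding contr_def rotm_def by (simp add: vec_eq_iff sum_distrib_left if_distrib mult.assoc cong: if_cong)

definition mval :: "real \<Rightarrow> 'n::finite set \<Rightarrow> complex" where
  "mval th S = exp (complex_of_real (- th * real_of_int (2 * int (card S) - int CARD('n))))"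

definition Mxd :: "real \<Rightarrow> complex^('n::finite set)^('n set)" where
  "Mxd th = mexp_diag ((- th) *\<^sub>R Nop)"

lemma Mx_nth: "Mxd th $ T $ S = (if T = S then mval th S else 0)"
  by (simp add: Mxd_def mexp_diag_def Nop_def mval_def cscaleR)

lemma sum_ifl: "(\<Sum>k\<in>UNIV. (if (T::'a::finite) = k then a k else 0) * (B k :: complex)) = a T * B T"
proof -
  have "(\<Sum>k\<in>UNIV. (if T = k then a k else 0) * B k) = (\<Sum>k\<in>UNIV. if T = k then a k * B k else 0)"
    by (intro sum.cong) auto
  then show ?thesis by simp
qed

lemma sum_ifr: "(\<Sum>k\<in>UNIV. (B k :: complex) * (if k = (S::'a::finite) then a k else 0)) = B S * a S"
proof -
  have "(\<Sum>k\<in>UNIV. B k * (if k = S then a k else 0)) = (\<Sum>k\<in>UNIV. if k = S then B k * a k else 0)"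
    by (intro sum.cong) auto
  then show ?thesis by simp
qed

lemma Mx_left: "(Mxd th ** A) $ T $ S = mval th T * A $ T $ S"
  unfolding matrix_matrix_mult_def vec_lambda_beta Mx_nth by (rule sum_ifl)

lemma Mx_right: "(A ** Mxd th) $ T $ S = A $ T $ S * mval th S"
  unfolding matrix_matrix_mult_def vec_lambda_beta Mx_nth by (rule sum_ifr)

lemma mval_insert: "j \<notin> S \<Longrightarrow> mval th (insert j S) = exp (complex_of_real (- 2 * th)) * mval th (S :: 'n::finite set)"
  by (simp add: mval_def card_insert_if exp_add[symmetric] algebra_simps)

lemma mval_remove: "j \<in> S \<Longrightarrow> mval th (S - {j}) = exp (complex_of_real (2 * th)) * mval th (S :: 'n::finite set)"
proof -
  assume j: "j \<in> S"
  have "mval th S = mval th (insert j (S - {j}))" using j by (simp add: insert_absorb)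
  also have "\<dots> = exp (complex_of_real (- 2 * th)) * mval th (S - {j})" by (rule mval_insert) simp
  finally show ?thesis by (simp add: exp_minus_inverse exp_add[symmetric] field_simps flip: exp_add)
qed

lemma mval_insert': "j \<notin> S \<Longrightarrow> mval th (insert j S) = complex_of_real (exp (- 2 * th)) * mval th (S :: 'n::finite set)"
  unfolding exp_of_real[symmetric] by (rule mval_insert)

lemma mval_remove': "j \<in> S \<Longrightarrow> mval th (S - {j}) = complex_of_real (exp (2 * th)) * mval th (S :: 'n::finite set)"
  unfolding exp_of_real[symmetric] by (rule mval_remove)

lemma Mx_ext:
  "Mxd th ** ext_mult (z :: complex^'n::{finite,linorder})
   = exp (- 2 * th) *\<^sub>R (ext_mult z ** Mxd th)"
proof -
  have "mval th T * ext_mult z $ T $ S = exp (- 2 * th) *\<^sub>R (ext_mult z $ T $ S * mval th S)" for T S :: "'n set"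
    unfolding ext_mult_def vec_lambda_beta sum_distrib_left sum_distrib_right scaleR_right.sum
    by (intro sum.cong refl) (auto simp: mval_insert' cscaleR)
  then show ?thesis by (simp only: vec_eq_iff Mx_left Mx_right vector_scaleR_component) simp
qed

lemma Mx_contr:
  "Mxd th ** contr (z :: complex^'n::{finite,linorder})
   = exp (2 * th) *\<^sub>R (contr z ** Mxd th)"
proof -
  have "mval th T * contr z $ T $ S = exp (2 * th) *\<^sub>R (contr z $ T $ S * mval th S)" for T S :: "'n set"
    unfolding contr_def vec_lambda_beta sum_distrib_left sum_distrib_right scaleR_right.sum
    by (intro sum.cong refl) (auto simp: mval_remove' cscaleR)
  then show ?thesis by (simp only: vec_eq_iff Mx_left Mx_right vector_scaleR_component) simp
qed

lemma Mx_zero: "mexp_diag (0 *\<^sub>R (Nop :: complex^('n::finite set)^('n set))) = mat 1"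
  by (simp add: vec_eq_iff mexp_diag_def mat_def)

lemma rotm_nth[simp]: "rotm c w $ k = c * w $ k"
  by (simp add: rotm_def)

lemma rotm_adj: "rotm c w \<bullet> v = w \<bullet> rotm (cnj c) (v :: complex^'n)"
  by (simp add: inner_vec_def inner_complex_def algebra_simps)

lemma rotm_norm: "cmod c = 1 \<Longrightarrow> norm (rotm c w) = norm (w :: complex^'n)"
  by (simp add: norm_vec_def norm_mult)

lemma rotm_bl: "bounded_linear (rotm c :: complex^'n \<Rightarrow> _)"
proof -
  have "linear (rotm c :: complex^'n \<Rightarrow> _)"
    by (rule linearI) (simp_all add: vec_eq_iff distrib_left cscaleR mult_ac)
  then show ?thesis using linear_conv_bounded_linear by blast
qed

lemma omega_rot1: "omega u w = u \<bullet> rotm (- \<i>) w"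
  by (simp add: omega_def inner_vec_def inner_complex_def algebra_simps flip: sum_subtractf)

lemma omega_rot2: "omega w u = u \<bullet> rotm \<i> w"
  by (simp add: omega_def inner_vec_def inner_complex_def algebra_simps flip: sum_subtractf)


lemma int_decomp:
  fixes phi :: "'p \<Rightarrow> complex" and L :: "'a::euclidean_space \<Rightarrow> complex^'c::finite^'r::finite"
    and sig :: "'p \<Rightarrow> 'a"
  assumes int: "integrable M phi" and intm: "\<And>b. b \<in> Basis \<Longrightarrow> integrable M (\<lambda>p. phi p * complex_of_real (sig p \<bullet> b))"
    and L: "linear L"
  shows "integral\<^sup>L M (\<lambda>p. cscale (phi p) (L (x + sig p)))
    = cscale (integral\<^sup>L M phi) (L x) + (\<Sum>b\<in>Basis. cscale (integral\<^sup>L M (\<lambda>p. phi p * complex_of_real (sig p \<bullet> b))) (L b))"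
proof -
  have pw: "cscale (phi p) (L (x + sig p)) = cscale (phi p) (L x) + (\<Sum>b\<in>Basis. cscale (phi p * complex_of_real (sig p \<bullet> b)) (L b))" for p
  proof -
    have "L (sig p) = L (\<Sum>b\<in>Basis. (sig p \<bullet> b) *\<^sub>R b)" by (simp add: euclidean_representation)
    also have "\<dots> = (\<Sum>b\<in>Basis. (sig p \<bullet> b) *\<^sub>R L b)"
      using L by (simp add: linear_sum linear_scale)
    finally show ?thesis
      using L by (simp add: linear_add cscale_add_right cscale_sum cscale_scaleR)
  qed
  have "integral\<^sup>L M (\<lambda>p. cscale (phi p) (L (x + sig p)))
     = integral\<^sup>L M (\<lambda>p. cscale (phi p) (L x) + (\<Sum>b\<in>Basis. cscale (phi p * complex_of_real (sig p \<bullet> b)) (L b)))"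
    unfolding pw ..
  also have "\<dots> = integral\<^sup>L M (\<lambda>p. cscale (phi p) (L x)) + integral\<^sup>L M (\<lambda>p. \<Sum>b\<in>Basis. cscale (phi p * complex_of_real (sig p \<bullet> b)) (L b))"
    by (intro Bochner_Integration.integral_add Bochner_Integration.integrable_sum
          integrable_bounded_linear[OF bounded_linear_cscale_left] int intm)
  also have "integral\<^sup>L M (\<lambda>p. \<Sum>b\<in>Basis. cscale (phi p * complex_of_real (sig p \<bullet> b)) (L b))
      = (\<Sum>b\<in>Basis. integral\<^sup>L M (\<lambda>p. cscale (phi p * complex_of_real (sig p \<bullet> b)) (L b)))"
    by (intro Bochner_Integration.integral_sum integrable_bounded_linear[OF bounded_linear_cscale_left] intm)
  also have "\<dots> = (\<Sum>b\<in>Basis. cscale (integral\<^sup>L M (\<lambda>p. phi p * complex_of_real (sig p \<bullet> b))) (L b))"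
    by (intro sum.cong refl integral_bounded_linear[OF bounded_linear_cscale_left] intm)
  also have "integral\<^sup>L M (\<lambda>p. cscale (phi p) (L x)) = cscale (integral\<^sup>L M phi) (L x)"
    by (intro integral_bounded_linear[OF bounded_linear_cscale_left] int)
  finally show ?thesis .
qed

lemma swap_integral:
  fixes h :: "'a::euclidean_space \<times> 'a \<Rightarrow> complex"
  assumes h: "h \<in> borel_measurable borel"
  shows "integral\<^sup>L lborel (\<lambda>p. h (snd p, fst p)) = integral\<^sup>L lborel h"
    and "integrable lborel h \<Longrightarrow> integrable lborel (\<lambda>p. h (snd p, fst p))"
proof -
  have hm: "h \<in> borel_measurable (lborel \<Otimes>\<^sub>M lborel)"
    using h by (simp add: lborel_prod measurable_lborel2)
  have e: "(\<lambda>p. h (snd p, fst p)) = (\<lambda>(x, y). h (y, x))" by auto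
  show "integral\<^sup>L lborel (\<lambda>p. h (snd p, fst p)) = integral\<^sup>L lborel h"
    using lborel_pair.integral_product_swap[OF hm] unfolding e by (simp add: lborel_prod)
  assume "integrable lborel h"
  then have "integrable (lborel \<Otimes>\<^sub>M lborel) h" by (simp add: lborel_prod)
  from lborel_pair.integrable_product_swap[OF this] show "integrable lborel (\<lambda>p. h (snd p, fst p))"
    unfolding e by (simp add: lborel_prod)
qed


lemma sum_rep:
  assumes L: "linear (L :: 'a::euclidean_space \<Rightarrow> complex^'c::finite^'r::finite)"
  shows "(\<Sum>b\<in>Basis. cscale (c * complex_of_real (v \<bullet> b)) (L b)) = cscale c (L v)"
proof -
  have "L v = L (\<Sum>b\<in>Basis. (v \<bullet> b) *\<^sub>R b)" by (simp add: euclidean_representation)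
  also have "\<dots> = (\<Sum>b\<in>Basis. (v \<bullet> b) *\<^sub>R L b)"
    using L by (simp add: linear_sum linear_scale)
  finally show ?thesis by (simp add: cscale_sum cscale_scaleR)
qed

lemma linear_L1: "linear (\<lambda>u. cliff u ** (M :: complex^('n::{finite,linorder} set)^('n set)))"
  by (rule linearI) (simp_all add: linear_add[OF linear_cliff] linear_scale[OF linear_cliff] mm_add_left mm_scaleR_left)

lemma linear_L2: "linear (\<lambda>u. (M :: complex^('n::{finite,linorder} set)^('n set)) ** cliff u)"
  by (rule linearI) (simp_all add: linear_add[OF linear_cliff] linear_scale[OF linear_cliff] matrix_add_ldistrib mm_scaleR_right)

lemma core_inst:
  assumes "eps > 0" "beta > 0" "s \<noteq> 0" "c = - \<i> \<or> c = \<i>"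
  shows "core eps s beta (rotm c :: complex^'n \<Rightarrow> _) (rotm (cnj c))"
  using assms by (intro core.intro) (auto simp: rotm_adj rotm_norm rotm_bl)

lemma key_identity:
  fixes x :: "complex^'n::{finite,linorder}" and th :: real
  defines "E \<equiv> ext_mult x ** Mxd th" and "Cn \<equiv> contr x ** Mxd th"
  shows "cscale P (cliff x ** Mxd th) + cscale (k * P) (cliff (rotm (- \<i>) x) ** Mxd th)
     - (cscale P (Mxd th ** cliff x) + cscale (k * P) (Mxd th ** cliff (rotm \<i> x)))
   = cscale (P * ((1 - complex_of_real (exp (- 2 * th))) - \<i> * k * (1 + complex_of_real (exp (- 2 * th))))) E
     + cscale (P * ((1 - complex_of_real (exp (2 * th))) + \<i> * k * (1 + complex_of_real (exp (2 * th))))) Cn"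
proof -
  have 1: "cliff x ** Mxd th = E + Cn" unfolding E_def Cn_def cliff_def by (rule mm_add_left)
  have 2: "cliff (rotm (- \<i>) x) ** Mxd th = cscale (- \<i>) E + cscale \<i> Cn"
    unfolding E_def Cn_def cliff_def mm_add_left ext_mult_rotm contr_rotm mm_cscale_left by simp
  have 3: "Mxd th ** cliff x = exp (- 2 * th) *\<^sub>R E + exp (2 * th) *\<^sub>R Cn"
    unfolding E_def Cn_def cliff_def matrix_add_ldistrib Mx_ext Mx_contr ..
  have 4: "Mxd th ** cliff (rotm \<i> x) = cscale \<i> (exp (- 2 * th) *\<^sub>R E) + cscale (- \<i>) (exp (2 * th) *\<^sub>R Cn)"
    unfolding E_def Cn_def cliff_def matrix_add_ldistrib ext_mult_rotm contr_rotm mm_cscale_right Mx_ext Mx_contr by simp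
  show ?thesis
    unfolding 1 2 3 4 by (simp add: vec_eq_iff cscaleR algebra_simps)
qed

lemma KN_eq:
  assumes "lam \<noteq> 0"
  shows "KN lam tau (v :: complex^'n::finite) = (inverse (cosh (lam * tau) ^ CARD('n)) * exp (- (tanh (lam * tau) / lam) * (norm v)\<^sup>2)) *\<^sub>R Mxd (lam * tau)"
  using assms by (simp add: KN_def Kfun_def Mxd_def)

lemma IL_formula:
  fixes x :: "complex^'n::{finite,linorder}"
  assumes eps: "eps > 0" and lam: "lam > 0" and tau: "tau > 0"
  defines "beta \<equiv> tanh (lam * tau) / lam" and "Cc \<equiv> inverse (cosh (lam * tau) ^ CARD('n))"
  shows "(LINT p|lborel. cscale (complex_of_real (exp (- eps * ((norm (fst p))\<^sup>2 + (norm (snd p))\<^sup>2))) * cis (2 / lam * omega (fst p) (snd p)))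
            (A_sym lam (x + fst p) ** KN lam tau (x + snd p)))
   = cscale (complex_of_real Cc * core.Pc eps (2 / lam) beta x (rotm (- \<i>))) (cliff x ** Mxd (lam * tau))
     + cscale (complex_of_real Cc * core.kap eps (2 / lam) beta * core.Pc eps (2 / lam) beta x (rotm (- \<i>))) (cliff (rotm (- \<i>) x) ** Mxd (lam * tau))"
proof -
  have beta: "beta > 0" unfolding beta_def using lam tau by (simp add: tanh_real_pos_iff)
  have s: "2 / lam \<noteq> 0" using lam by simp
  interpret C: core eps "2 / lam" beta x "rotm (- \<i>)" "rotm \<i>"
    using core_inst[OF eps beta s, of "- \<i>"] by simp
  let ?M = "Mxd (lam * tau) :: complex^('n set)^('n set)"
  let ?phi = "\<lambda>p. complex_of_real Cc * C.Fq p"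
  have pw: "cscale (complex_of_real (exp (- eps * ((norm (fst p))\<^sup>2 + (norm (snd p))\<^sup>2))) * cis (2 / lam * omega (fst p) (snd p)))
            (A_sym lam (x + fst p) ** KN lam tau (x + snd p)) = cscale (?phi p) (cliff (x + fst p) ** ?M)" for p
  proof -
    have AK: "A_sym lam (x + fst p) ** KN lam tau (x + snd p) = (Cc * exp (- beta * (norm (x + snd p))\<^sup>2)) *\<^sub>R (cliff (x + fst p) ** ?M)"
      unfolding KN_eq[OF lam[THEN less_imp_neq, symmetric]] A_sym_def mm_scaleR_right beta_def Cc_def by simp
    show ?thesis
      unfolding AK cscale_scaleR C.Fq_def omega_rot1 by (simp add: mult_ac)
  qed
  have "(LINT p|lborel. cscale (complex_of_real (exp (- eps * ((norm (fst p))\<^sup>2 + (norm (snd p))\<^sup>2))) * cis (2 / lam * omega (fst p) (snd p)))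
            (A_sym lam (x + fst p) ** KN lam tau (x + snd p)))
      = (LINT p|lborel. cscale (?phi p) (cliff (x + fst p) ** ?M))"
    unfolding pw ..
  also have "\<dots> = cscale (integral\<^sup>L lborel ?phi) (cliff x ** ?M) + (\<Sum>b\<in>Basis. cscale (integral\<^sup>L lborel (\<lambda>p. ?phi p * complex_of_real (fst p \<bullet> b))) (cliff b ** ?M))"
    by (rule int_decomp[OF _ _ linear_L1]) (auto intro: integrable_mult_right C.integrable_Fq C.integrable_Fq_mom simp: mult.assoc)
  also have "integral\<^sup>L lborel ?phi = complex_of_real Cc * C.Pc"
    unfolding C.Pc_def by (rule integral_mult_right_zero)
  also have "(\<Sum>b\<in>Basis. cscale (integral\<^sup>L lborel (\<lambda>p. ?phi p * complex_of_real (fst p \<bullet> b))) (cliff b ** ?M))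
     = (\<Sum>b\<in>Basis. cscale (complex_of_real Cc * C.kap * C.Pc * complex_of_real (rotm (- \<i>) x \<bullet> b)) (cliff b ** ?M))"
  proof (intro sum.cong refl arg_cong2[where f=cscale])
    fix b
    have "integral\<^sup>L lborel (\<lambda>p. ?phi p * complex_of_real (fst p \<bullet> b)) = complex_of_real Cc * integral\<^sup>L lborel (\<lambda>p. C.Fq p * complex_of_real (fst p \<bullet> b))"
      by (simp add: mult.assoc)
    then show "integral\<^sup>L lborel (\<lambda>p. ?phi p * complex_of_real (fst p \<bullet> b)) = complex_of_real Cc * C.kap * C.Pc * complex_of_real (rotm (- \<i>) x \<bullet> b)"
      unfolding C.mom_Fq by (simp add: mult_ac)
  qed
  also have "\<dots> = cscale (complex_of_real Cc * C.kap * C.Pc) (cliff (rotm (- \<i>) x) ** ?M)"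
    by (rule sum_rep[OF linear_L1])
  finally show ?thesis .
qed

lemma IR_formula:
  fixes x :: "complex^'n::{finite,linorder}"
  assumes eps: "eps > 0" and lam: "lam > 0" and tau: "tau > 0"
  defines "beta \<equiv> tanh (lam * tau) / lam" and "Cc \<equiv> inverse (cosh (lam * tau) ^ CARD('n))"
  shows "(LINT p|lborel. cscale (complex_of_real (exp (- eps * ((norm (fst p))\<^sup>2 + (norm (snd p))\<^sup>2))) * cis (2 / lam * omega (fst p) (snd p)))
            (KN lam tau (x + fst p) ** A_sym lam (x + snd p)))
   = cscale (complex_of_real Cc * core.Pc eps (2 / lam) beta x (rotm \<i>)) (Mxd (lam * tau) ** cliff x)
     + cscale (complex_of_real Cc * core.kap eps (2 / lam) beta * core.Pc eps (2 / lam) beta x (rotm \<i>)) (Mxd (lam * tau) ** cliff (rotm \<i> x))"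
proof -
  have beta: "beta > 0" unfolding beta_def using lam tau by (simp add: tanh_real_pos_iff)
  have s: "2 / lam \<noteq> 0" using lam by simp
  interpret C: core eps "2 / lam" beta x "rotm \<i>" "rotm (- \<i>)"
    using core_inst[OF eps beta s, of "\<i>"] by simp
  let ?M = "Mxd (lam * tau) :: complex^('n set)^('n set)"
  let ?phi = "\<lambda>p. complex_of_real Cc * C.Fq (snd p, fst p)"
  have pw: "cscale (complex_of_real (exp (- eps * ((norm (fst p))\<^sup>2 + (norm (snd p))\<^sup>2))) * cis (2 / lam * omega (fst p) (snd p)))
            (KN lam tau (x + fst p) ** A_sym lam (x + snd p)) = cscale (?phi p) (?M ** cliff (x + snd p))" for p
  proof -
    have AK: "KN lam tau (x + fst p) ** A_sym lam (x + snd p) = (Cc * exp (- beta * (norm (x + fst p))\<^sup>2)) *\<^sub>R (?M ** cliff (x + snd p))"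
      unfolding KN_eq[OF lam[THEN less_imp_neq, symmetric]] A_sym_def mm_scaleR_left beta_def Cc_def by simp
    show ?thesis
      unfolding AK cscale_scaleR C.Fq_def omega_rot2 fst_conv snd_conv by (simp add: mult_ac add_ac)
  qed
  have hm: "(\<lambda>q. C.Fq q * complex_of_real (fst q \<bullet> b)) \<in> borel_measurable borel" for b
    by (rule borel_measurable_continuous_onI) (intro continuous_intros C.Fq_cont)
  have int1: "integrable lborel (\<lambda>p. C.Fq (snd p, fst p))"
    by (rule swap_integral(2)[OF C.Fq_meas C.integrable_Fq])
  have int2: "integrable lborel (\<lambda>p. C.Fq (snd p, fst p) * complex_of_real (snd p \<bullet> b))" for b
    using swap_integral(2)[OF hm C.integrable_Fq_mom, of b] by simp
  have "(LINT p|lborel. cscale (complex_of_real (exp (- eps * ((norm (fst p))\<^sup>2 + (norm (snd p))\<^sup>2))) * cis (2 / lam * omega (fst p) (snd p)))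
            (KN lam tau (x + fst p) ** A_sym lam (x + snd p)))
      = (LINT p|lborel. cscale (?phi p) (?M ** cliff (x + snd p)))"
    unfolding pw ..
  also have "\<dots> = cscale (integral\<^sup>L lborel ?phi) (?M ** cliff x) + (\<Sum>b\<in>Basis. cscale (integral\<^sup>L lborel (\<lambda>p. ?phi p * complex_of_real (snd p \<bullet> b))) (?M ** cliff b))"
    by (rule int_decomp[OF _ _ linear_L2]) (auto intro: integrable_mult_right int1 int2 simp: mult.assoc)
  also have "integral\<^sup>L lborel ?phi = complex_of_real Cc * C.Pc"
    unfolding C.Pc_def integral_mult_right_zero swap_integral(1)[OF C.Fq_meas] ..
  also have "(\<Sum>b\<in>Basis. cscale (integral\<^sup>L lborel (\<lambda>p. ?phi p * complex_of_real (snd p \<bullet> b))) (?M ** cliff b))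
     = (\<Sum>b\<in>Basis. cscale (complex_of_real Cc * C.kap * C.Pc * complex_of_real (rotm \<i> x \<bullet> b)) (?M ** cliff b))"
  proof (intro sum.cong refl arg_cong2[where f=cscale])
    fix b
    have "integral\<^sup>L lborel (\<lambda>p. ?phi p * complex_of_real (snd p \<bullet> b)) = complex_of_real Cc * integral\<^sup>L lborel (\<lambda>p. (\<lambda>q. C.Fq q * complex_of_real (fst q \<bullet> b)) (snd p, fst p))"
      by (simp add: mult.assoc)
    also have "\<dots> = complex_of_real Cc * integral\<^sup>L lborel (\<lambda>q. C.Fq q * complex_of_real (fst q \<bullet> b))"
      unfolding swap_integral(1)[OF hm] ..
    finally show "integral\<^sup>L lborel (\<lambda>p. ?phi p * complex_of_real (snd p \<bullet> b)) = complex_of_real Cc * C.kap * C.Pc * complex_of_real (rotm \<i> x \<bullet> b)"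
      unfolding C.mom_Fq by (simp add: mult_ac)
  qed
  also have "\<dots> = cscale (complex_of_real Cc * C.kap * C.Pc) (?M ** cliff (rotm \<i> x))"
    by (rule sum_rep[OF linear_L2])
  finally show ?thesis .
qed

lemma Pc_same:
  fixes x :: "complex^'n::{finite,linorder}"
  assumes "eps > 0" "beta > 0" "s \<noteq> 0"
  shows "core.Pc eps s beta x (rotm \<i>) = core.Pc eps s beta x (rotm (- \<i>))"
proof -
  interpret C1: core eps s beta x "rotm \<i>" "rotm (- \<i>)"
    using core_inst[OF assms, of "\<i>"] by simp
  interpret C2: core eps s beta x "rotm (- \<i>)" "rotm \<i>"
    using core_inst[OF assms, of "- \<i>"] by simp
  show ?thesis unfolding C1.Pc_eq C2.Pc_eq C1.Zc_def C2.Zc_def C1.K0_def C2.K0_def C1.alpha_def C2.alpha_def C1.Bx_def C2.Bx_def ..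
qed


lemma Lim_eq_if_diff:
  fixes f g :: "'a \<Rightarrow> 'b::real_normed_vector"
  assumes "((\<lambda>e. f e - g e) \<longlongrightarrow> 0) F"
  shows "Lim F f = Lim F g"
proof -
  have "(f \<longlongrightarrow> L) F \<longleftrightarrow> (g \<longlongrightarrow> L) F" for L
  proof
    assume "(f \<longlongrightarrow> L) F"
    from tendsto_diff[OF this assms] show "(g \<longlongrightarrow> L) F" by simp
  next
    assume "(g \<longlongrightarrow> L) F"
    from tendsto_add[OF this assms] show "(f \<longlongrightarrow> L) F" by simp
  qed
  then show ?thesis unfolding t2_space_class.Lim_def by simp
qed

lemma coef_lim:
  assumes lam: "lam > 0" and tau: "tau > 0"
  defines "th \<equiv> lam * tau" and "beta \<equiv> tanh (lam * tau) / lam" and "s \<equiv> 2 / lam"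
  shows "((\<lambda>eps. (1 - complex_of_real (exp (- 2 * th))) - \<i> * core.kap eps s beta * (1 + complex_of_real (exp (- 2 * th)))) \<longlongrightarrow> 0) (at_right 0)"
    and "((\<lambda>eps. (1 - complex_of_real (exp (2 * th))) + \<i> * core.kap eps s beta * (1 + complex_of_real (exp (2 * th)))) \<longlongrightarrow> 0) (at_right 0)"
proof -
  define rr where "rr eps = - (s * beta) / (2 * eps\<^sup>2 + s\<^sup>2 / 2 + 2 * eps * beta)" for eps :: real
  have s0: "s \<noteq> 0" using lam by (simp add: s_def)
  have beta0: "beta > 0" using lam tau by (simp add: beta_def)
  have ik: "\<i> * core.kap eps s beta = - complex_of_real (rr eps)" if "eps > 0" for eps
  proof -
    have C: "core eps s beta (id :: real \<Rightarrow> real) id"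
      using that beta0 s0 by (intro core.intro) (auto simp: id_def bounded_linear_ident)
    have "s / (2 * eps) * (- beta / (core.alpha eps s + beta)) = rr eps"
      unfolding core.alpha_def[OF C] rr_def using that beta0 s0
      by (simp add: field_simps power2_eq_square)
    then show ?thesis unfolding core.kap_def[OF C] by (simp flip: of_real_mult)
  qed
  have rr0: "rr 0 = - tanh th"
    unfolding rr_def s_def beta_def th_def using lam by (simp add: field_simps power2_eq_square)
  have rrlim: "(rr \<longlongrightarrow> - tanh th) (at_right 0)"
  proof -
    have "isCont rr 0" unfolding rr_def using s0 by (intro continuous_intros) simp
    then have "(rr \<longlongrightarrow> rr 0) (at 0)" by (simp add: isCont_def)
    then show ?thesis unfolding rr0 by (rule filterlim_mono) (auto intro: at_within_le_at)
  qed
  have ev: "eventually (\<lambda>eps. eps > 0) (at_right (0::real))"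
    by (simp add: eventually_at_right_less)
  have p: "1 + exp (- 2 * th) \<noteq> 0" using exp_gt_zero[of "- 2 * th"] by linarith
  have t1: "(1 - exp (- 2 * th)) + (- tanh th) * (1 + exp (- 2 * th)) = 0"
    unfolding tanh_real_altdef using p by simp
  have t2: "(1 - exp (2 * th)) - (- tanh th) * (1 + exp (2 * th)) = 0"
  proof -
    have "exp (2 * th) * exp (- 2 * th) = 1" by (simp flip: exp_add)
    then show ?thesis unfolding tanh_real_altdef using p by (simp add: field_simps)
  qed
  have "((\<lambda>eps. complex_of_real ((1 - exp (- 2 * th)) + rr eps * (1 + exp (- 2 * th)))) \<longlongrightarrow>
      complex_of_real ((1 - exp (- 2 * th)) + (- tanh th) * (1 + exp (- 2 * th)))) (at_right 0)"
    by (intro tendsto_intros rrlim)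
  then have "((\<lambda>eps. complex_of_real ((1 - exp (- 2 * th)) + rr eps * (1 + exp (- 2 * th)))) \<longlongrightarrow> 0) (at_right 0)"
    unfolding t1 by simp
  then show "((\<lambda>eps. (1 - complex_of_real (exp (- 2 * th))) - \<i> * core.kap eps s beta * (1 + complex_of_real (exp (- 2 * th)))) \<longlongrightarrow> 0) (at_right 0)"
    by (rule Lim_transform_eventually) (use ev in \<open>eventually_elim, simp add: ik\<close>)
  have "((\<lambda>eps. complex_of_real ((1 - exp (2 * th)) - rr eps * (1 + exp (2 * th)))) \<longlongrightarrow>
      complex_of_real ((1 - exp (2 * th)) - (- tanh th) * (1 + exp (2 * th)))) (at_right 0)"
    by (intro tendsto_intros rrlim)
  then have "((\<lambda>eps. complex_of_real ((1 - exp (2 * th)) - rr eps * (1 + exp (2 * th)))) \<longlongrightarrow> 0) (at_right 0)"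
    unfolding t2 by simp
  then show "((\<lambda>eps. (1 - complex_of_real (exp (2 * th))) + \<i> * core.kap eps s beta * (1 + complex_of_real (exp (2 * th)))) \<longlongrightarrow> 0) (at_right 0)"
    by (rule Lim_transform_eventually) (use ev in \<open>eventually_elim, simp add: ik\<close>)
qed

lemma diff_tendsto:
  fixes x :: "complex^'n::{finite,linorder}"
  assumes lam: "lam > 0" and tau: "tau > 0"
  shows "((\<lambda>eps. (LINT p|lborel. cscale (complex_of_real (exp (- eps * ((norm (fst p))\<^sup>2 + (norm (snd p))\<^sup>2))) * cis (2 / lam * omega (fst p) (snd p)))
            (A_sym lam (x + fst p) ** KN lam tau (x + snd p)))
         - (LINT p|lborel. cscale (complex_of_real (exp (- eps * ((norm (fst p))\<^sup>2 + (norm (snd p))\<^sup>2))) * cis (2 / lam * omega (fst p) (snd p)))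
            (KN lam tau (x + fst p) ** A_sym lam (x + snd p)))) \<longlongrightarrow> 0) (at_right 0)"
    (is "((\<lambda>eps. ?IL eps - ?IR eps) \<longlongrightarrow> 0) _")
proof -
  define th where "th = lam * tau"
  define beta where "beta = tanh (lam * tau) / lam"
  define s where "s = 2 / lam"
  define Cc where "Cc = inverse (cosh (lam * tau) ^ CARD('n))"
  define P where "P eps = core.Pc eps s beta x (rotm (- \<i>))" for eps
  define k where "k eps = core.kap eps s beta" for eps
  define E where "E = ext_mult x ** Mxd th"
  define Cn where "Cn = contr x ** Mxd th"
  define g1 where "g1 eps = (1 - complex_of_real (exp (- 2 * th))) - \<i> * k eps * (1 + complex_of_real (exp (- 2 * th)))" for eps
  define g2 where "g2 eps = (1 - complex_of_real (exp (2 * th))) + \<i> * k eps * (1 + complex_of_real (exp (2 * th)))" for eps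
  define B where "B = (2 * pi / \<bar>s\<bar>) ^ DIM(complex^'n::{finite,linorder})"
  have beta0: "beta > 0" unfolding beta_def using lam tau by simp
  have s0: "s \<noteq> 0" unfolding s_def using lam by simp
  have Cc0: "Cc \<ge> 0" unfolding Cc_def using lam tau by simp
  have ev: "eventually (\<lambda>eps. eps > 0) (at_right (0::real))"
    by (simp add: eventually_at_right_less)
  have eq: "?IL eps - ?IR eps = cscale ((complex_of_real Cc * P eps) * g1 eps) E + cscale ((complex_of_real Cc * P eps) * g2 eps) Cn"
    if eps: "eps > 0" for eps
  proof -
    have ac: "complex_of_real Cc * k eps * P eps = k eps * (complex_of_real Cc * P eps)" by (simp add: mult_ac)
    have "?IL eps - ?IR eps = cscale (complex_of_real Cc * P eps) (cliff x ** Mxd th) + cscale (k eps * (complex_of_real Cc * P eps)) (cliff (rotm (- \<i>) x) ** Mxd th)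
      - (cscale (complex_of_real Cc * P eps) (Mxd th ** cliff x) + cscale (k eps * (complex_of_real Cc * P eps)) (Mxd th ** cliff (rotm \<i> x)))"
      unfolding IL_formula[OF eps lam tau] IR_formula[OF eps lam tau] Pc_same[OF eps beta0[unfolded beta_def] s0[unfolded s_def]]
      unfolding P_def k_def th_def s_def beta_def Cc_def[symmetric] ac[unfolded P_def k_def s_def beta_def] ..
    also have "\<dots> = cscale ((complex_of_real Cc * P eps) * g1 eps) E + cscale ((complex_of_real Cc * P eps) * g2 eps) Cn"
      unfolding key_identity E_def Cn_def g1_def g2_def ..
    finally show ?thesis .
  qed
  have Pb: "norm (P eps) \<le> B" if eps: "eps > 0" for eps
  proof -
    interpret C: core eps s beta x "rotm (- \<i>)" "rotm \<i>"
      using core_inst[OF eps beta0 s0, of "- \<i>"] by simp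
    show ?thesis unfolding P_def B_def by (rule C.Pc_bound)
  qed
  have c1: "((\<lambda>eps. (complex_of_real Cc * P eps) * g eps) \<longlongrightarrow> 0) (at_right 0)"
    if gl: "(g \<longlongrightarrow> 0) (at_right 0)" for g
  proof (rule Lim_null_comparison)
    show "\<forall>\<^sub>F eps in at_right 0. norm (complex_of_real Cc * P eps * g eps) \<le> Cc * B * norm (g eps)"
      using ev
    proof eventually_elim
      case (elim eps)
      have "norm (complex_of_real Cc * P eps * g eps) = Cc * norm (P eps) * norm (g eps)"
        using Cc0 by (simp add: norm_mult)
      also have "\<dots> \<le> Cc * B * norm (g eps)"
        using Pb[OF elim] Cc0 by (intro mult_right_mono mult_left_mono) auto
      finally show ?case .
    qed
    show "((\<lambda>eps. Cc * B * norm (g eps)) \<longlongrightarrow> 0) (at_right 0)"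
      using tendsto_mult_right_zero[OF tendsto_norm_zero[OF gl], of "Cc * B"] .
  qed
  have g1l: "(g1 \<longlongrightarrow> 0) (at_right 0)"
    unfolding g1_def k_def th_def s_def beta_def using coef_lim(1)[OF lam tau] .
  have g2l: "(g2 \<longlongrightarrow> 0) (at_right 0)"
    unfolding g2_def k_def th_def s_def beta_def using coef_lim(2)[OF lam tau] .
  have "((\<lambda>eps. cscale ((complex_of_real Cc * P eps) * g1 eps) E + cscale ((complex_of_real Cc * P eps) * g2 eps) Cn) \<longlongrightarrow> cscale 0 E + cscale 0 Cn) (at_right 0)"
    by (intro tendsto_add bounded_linear.tendsto[OF bounded_linear_cscale_left] c1[OF g1l] c1[OF g2l])
  then have "((\<lambda>eps. cscale ((complex_of_real Cc * P eps) * g1 eps) E + cscale ((complex_of_real Cc * P eps) * g2 eps) Cn) \<longlongrightarrow> 0) (at_right 0)"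
    by (simp add: cscale_zero)
  moreover have "\<forall>\<^sub>F eps in at_right 0. cscale ((complex_of_real Cc * P eps) * g1 eps) E + cscale ((complex_of_real Cc * P eps) * g2 eps) Cn = ?IL eps - ?IR eps"
    using ev by eventually_elim (rule eq[symmetric])
  ultimately show ?thesis by (rule Lim_transform_eventually)
qed

lemma mexp_diag_zero: "mexp_diag (0 :: complex^'a::finite^'a) = mat 1"
  by (simp add: vec_eq_iff mexp_diag_def mat_def)

theorem lemmaC2:
  fixes lam tau :: real
  assumes "0 \<le> lam" and "lam \<le> 1" and "0 < tau"
  shows "moyal lam (A_sym lam :: ('n::{finite,linorder}) symb) (KN lam tau)
       = moyal lam (KN lam tau) (A_sym lam)"
proof (rule ext)
  fix x :: "complex^'n::{finite,linorder}"
  show "moyal lam (A_sym lam) (KN lam tau) x = moyal lam (KN lam tau) (A_sym lam) x"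
  proof (cases "lam = 0")
    case True
    show ?thesis
      unfolding moyal_def KN_def A_sym_def True
      by (simp add: mexp_diag_zero mm_scaleR_left mm_scaleR_right)
  next
    case False
    then have lam: "lam > 0" using assms by simp
    show ?thesis
      unfolding moyal_def if_not_P[OF False]
      apply (rule Lim_eq_if_diff)
      using tendsto_scaleR[OF tendsto_const diff_tendsto[OF lam assms(3), of x], of "inverse ((lam * pi) ^ (2 * CARD('n)))"]
      unfolding scaleR_diff_right scaleR_zero_right .
  qed
qed


end
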